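(* Let $X$ and $Y$ be nonempty totally bounded metric spaces. Then $d^{us}_{GH}(X,Y)=d_{GH}(X,Y)$.
   Context: For a metric space, $|xy|$ denotes distance. A set-valued map $f:X\rightrightarrows Y$ assigns to each $x\in X$ a nonempty $f(x)\subseteq Y$ and is identified with its graph. A correspondence between $X$ and $Y$ is a subset $R\subseteq X\times Y$ whose projections to $X$ and to $Y$ are both surjective, regarded as the set-valued map $x\mapsto R(x)=\{y:(x,y)\in R\}$; $R^{-1}=\{(y,x):(x,y)\in R\}$; $\mathcal R(X,Y)$ is the set of all correspondences. The distortion of a nonempty $\sigma\subseteq X\times Y$ is $\operatorname{dis}\sigma=\sup\{||xx'|-|yy'||:(x,y),(x',y')\in\sigma\}\in[0,\infty]$, and $d_{GH}(X,Y)=\frac12\inf\{\operatorname{dis}R:R\in\mathcal R(X,Y)\}$. A set-valued map $f$ is upper semicontinuous if for every $x$ and every open $U\supseteq f(x)$ there is a neighborhood $V$ of $x$ with $f(x')\subseteq U$ for all $x'\in V$. $\mathcal R_{us}(X,Y)$ is the set of $R\in\mathcal R(X,Y)$ with both $R$ and $R^{-1}$ upper semicontinuous, and $d^{us}_{GH}(X,Y)=\frac12\inf\{\operatorname{dis}R:R\in\mathcal R_{us}(X,Y)\}$. *)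

theory Defs
  imports "HOL-Analysis.Analysis"
begin

text \<open>Metric spaces are modelled as subsets X of a type of class metric_space,
  with the restricted metric. Correspondences are relations R \<subseteq> X \<times> Y
  with both projections surjective.\<close>

definition correspondences :: "'a::metric_space set \<Rightarrow> 'b::metric_space set \<Rightarrow> ('a \<times> 'b) set set" where
  "correspondences X Y = {R. R \<subseteq> X \<times> Y \<and> fst ` R = X \<and> snd ` R = Y}"

definition distortion :: "('a::metric_space \<times> 'b::metric_space) set \<Rightarrow> ereal" where
  "distortion \<sigma> = (SUP p\<in>\<sigma> \<times> \<sigma>.
      ereal \<bar>dist (fst (fst p)) (fst (snd p)) - dist (snd (fst p)) (snd (snd p))\<bar>)"

definition usc_on :: "'a::metric_space set \<Rightarrow> ('a \<times> 'b::metric_space) set \<Rightarrow> bool" where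
  "usc_on X R \<longleftrightarrow> (\<forall>x\<in>X. \<forall>U. open U \<and> R `` {x} \<subseteq> U \<longrightarrow>
      (\<exists>e>0. \<forall>x'\<in>X. dist x' x < e \<longrightarrow> R `` {x'} \<subseteq> U))"

definition us_correspondences :: "'a::metric_space set \<Rightarrow> 'b::metric_space set \<Rightarrow> ('a \<times> 'b) set set" where
  "us_correspondences X Y = {R \<in> correspondences X Y. usc_on X R \<and> usc_on Y (converse R)}"

definition GH_dist :: "'a::metric_space set \<Rightarrow> 'b::metric_space set \<Rightarrow> ereal" where
  "GH_dist X Y = (INF R\<in>correspondences X Y. distortion R) / 2"

definition GH_dist_us :: "'a::metric_space set \<Rightarrow> 'b::metric_space set \<Rightarrow> ereal" where
  "GH_dist_us X Y = (INF R\<in>us_correspondences X Y. distortion R) / 2"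

end

theory Submission
  imports Defs
begin

lemma net_local:
  fixes x :: "'a::metric_space"
  assumes "finite N"
  shows "\<exists>e>0. \<forall>x'. dist x' x < e \<longrightarrow> (\<forall>c\<in>N. dist c x' \<le> \<epsilon> \<longrightarrow> dist c x \<le> \<epsilon>)"
proof -
  define F where "F = {c\<in>N. dist c x > \<epsilon>}"
  have fF: "finite F" using assms unfolding F_def by simp
  define e where "e = (if F = {} then 1 else Min ((\<lambda>c. dist c x - \<epsilon>) ` F))"
  have epos: "e > 0"
    using fF unfolding e_def by (auto simp: F_def)
  have ele: "e \<le> dist c x - \<epsilon>" if "c \<in> F" for c
    using fF that unfolding e_def by auto
  show ?thesis
  proof (intro exI[of _ e] conjI allI impI ballI epos)
    fix x' c assume h: "dist x' x < e" "c \<in> N" "dist c x' \<le> \<epsilon>"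
    show "dist c x \<le> \<epsilon>"
    proof (rule ccontr)
      assume "\<not> dist c x \<le> \<epsilon>"
      then have "c \<in> F" using h unfolding F_def by auto
      then have "e \<le> dist c x - \<epsilon>" by (rule ele)
      moreover have "dist c x \<le> dist c x' + dist x' x" by (rule dist_triangle)
      ultimately show False using h by linarith
    qed
  qed
qed

lemma usc_from_local:
  assumes "\<And>x. x \<in> X \<Longrightarrow> \<exists>e>0. \<forall>x'\<in>X. dist x' x < e \<longrightarrow> R``{x'} \<subseteq> R``{x}"
  shows "usc_on X R"
  unfolding usc_on_def
proof (intro ballI allI impI)
  fix x U assume "x \<in> X" "open U \<and> R `` {x} \<subseteq> U"
  then show "\<exists>e>0. \<forall>x'\<in>X. dist x' x < e \<longrightarrow> R `` {x'} \<subseteq> U"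
    using assms[of x] by blast
qed

lemma approx_us:
  fixes X :: "'a::metric_space set" and Y :: "'b::metric_space set"
  assumes tX: "totally_bounded X" and tY: "totally_bounded Y"
    and R: "R \<in> correspondences X Y" and \<epsilon>: "\<epsilon> > 0"
  shows "\<exists>R'\<in>us_correspondences X Y. distortion R' \<le> distortion R + ereal (8 * \<epsilon>)"
proof -
  obtain NX where NX: "finite NX" "X \<subseteq> (\<Union>c\<in>NX. {y. dist c y < \<epsilon>})"
    using tX \<epsilon> unfolding totally_bounded_metric by blast
  obtain NY where NY: "finite NY" "Y \<subseteq> (\<Union>c\<in>NY. {y. dist c y < \<epsilon>})"
    using tY \<epsilon> unfolding totally_bounded_metric by blast
  have Rs: "R \<subseteq> X \<times> Y" "fst ` R = X" "snd ` R = Y"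
    using R unfolding correspondences_def by auto
  define R' where "R' = {(x,y). x \<in> X \<and> y \<in> Y \<and> (\<exists>(a,b)\<in>R. \<exists>c\<in>NX. \<exists>d\<in>NY.
     dist c x \<le> \<epsilon> \<and> dist c a \<le> \<epsilon> \<and> dist d y \<le> \<epsilon> \<and> dist d b \<le> \<epsilon>)}"
  have corr: "R' \<in> correspondences X Y"
    unfolding correspondences_def
  proof (intro CollectI conjI)
    show "R' \<subseteq> X \<times> Y" unfolding R'_def by auto
    show "fst ` R' = X"
    proof
      show "fst ` R' \<subseteq> X" unfolding R'_def by auto
      show "X \<subseteq> fst ` R'"
      proof
        fix x assume x: "x \<in> X"
        then obtain b where b: "(x,b) \<in> R" using Rs(2) by force
        then have bY: "b \<in> Y" using Rs(1) by auto
        obtain c where c: "c \<in> NX" "dist c x < \<epsilon>" using NX x by blast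
        obtain d where d: "d \<in> NY" "dist d b < \<epsilon>" using NY bY by blast
        have "\<exists>(a',b')\<in>R. \<exists>c\<in>NX. \<exists>d\<in>NY. dist c x \<le> \<epsilon> \<and> dist c a' \<le> \<epsilon> \<and> dist d b \<le> \<epsilon> \<and> dist d b' \<le> \<epsilon>"
          using b c d by (intro bexI[OF _ b]) (auto intro!: bexI[OF _ c(1)] bexI[OF _ d(1)])
        then have "(x,b) \<in> R'" unfolding R'_def using x bY by simp
        then show "x \<in> fst ` R'" by force
      qed
    qed
    show "snd ` R' = Y"
    proof
      show "snd ` R' \<subseteq> Y" unfolding R'_def by auto
      show "Y \<subseteq> snd ` R'"
      proof
        fix y assume y: "y \<in> Y"
        then obtain a where a: "(a,y) \<in> R" using Rs(3) by force
        then have aX: "a \<in> X" using Rs(1) by auto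
        obtain c where c: "c \<in> NX" "dist c a < \<epsilon>" using NX aX by blast
        obtain d where d: "d \<in> NY" "dist d y < \<epsilon>" using NY y by blast
        have "\<exists>(a',b')\<in>R. \<exists>c\<in>NX. \<exists>d\<in>NY. dist c a \<le> \<epsilon> \<and> dist c a' \<le> \<epsilon> \<and> dist d y \<le> \<epsilon> \<and> dist d b' \<le> \<epsilon>"
          using a c d by (intro bexI[OF _ a]) (auto intro!: bexI[OF _ c(1)] bexI[OF _ d(1)])
        then have "(a,y) \<in> R'" unfolding R'_def using y aX by simp
        then show "y \<in> snd ` R'" by force
      qed
    qed
  qed
  have usc1: "usc_on X R'"
  proof (rule usc_from_local)
    fix x assume x: "x \<in> X"
    obtain e where e: "e > 0" "\<forall>x'. dist x' x < e \<longrightarrow> (\<forall>c\<in>NX. dist c x' \<le> \<epsilon> \<longrightarrow> dist c x \<le> \<epsilon>)"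
      using net_local[OF NX(1)] by blast
    have "\<forall>x'\<in>X. dist x' x < e \<longrightarrow> R'``{x'} \<subseteq> R'``{x}"
    proof (intro ballI impI subsetI)
      fix x' y assume h: "x' \<in> X" "dist x' x < e" "y \<in> R'``{x'}"
      then have "(x', y) \<in> R'" by simp
      then obtain a b c d where w: "(a,b) \<in> R" "c \<in> NX" "d \<in> NY" "dist c x' \<le> \<epsilon>" "dist c a \<le> \<epsilon>"
        "dist d y \<le> \<epsilon>" "dist d b \<le> \<epsilon>" "y \<in> Y" unfolding R'_def by blast
      then have "dist c x \<le> \<epsilon>" using e h by blast
      then have "(x,y) \<in> R'" unfolding R'_def using w x by fastforce
      then show "y \<in> R'``{x}" by simp
    qed
    then show "\<exists>e>0. \<forall>x'\<in>X. dist x' x < e \<longrightarrow> R'``{x'} \<subseteq> R'``{x}" using e by blast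
  qed
  have usc2: "usc_on Y (converse R')"
  proof (rule usc_from_local)
    fix y assume y: "y \<in> Y"
    obtain e where e: "e > 0" "\<forall>y'. dist y' y < e \<longrightarrow> (\<forall>d\<in>NY. dist d y' \<le> \<epsilon> \<longrightarrow> dist d y \<le> \<epsilon>)"
      using net_local[OF NY(1)] by blast
    have "\<forall>y'\<in>Y. dist y' y < e \<longrightarrow> (converse R')``{y'} \<subseteq> (converse R')``{y}"
    proof (intro ballI impI subsetI)
      fix y' x assume h: "y' \<in> Y" "dist y' y < e" "x \<in> (converse R')``{y'}"
      then have "(x, y') \<in> R'" by simp
      then obtain a b c d where w: "(a,b) \<in> R" "c \<in> NX" "d \<in> NY" "dist c x \<le> \<epsilon>" "dist c a \<le> \<epsilon>"
        "dist d y' \<le> \<epsilon>" "dist d b \<le> \<epsilon>" "x \<in> X" unfolding R'_def by blast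
      then have "dist d y \<le> \<epsilon>" using e h by blast
      then have "(x,y) \<in> R'" unfolding R'_def using w y by fastforce
      then show "x \<in> (converse R')``{y}" by simp
    qed
    then show "\<exists>e>0. \<forall>y'\<in>Y. dist y' y < e \<longrightarrow> (converse R')``{y'} \<subseteq> (converse R')``{y}" using e by blast
  qed
  have close: "\<exists>(a,b)\<in>R. dist x a \<le> 2*\<epsilon> \<and> dist y b \<le> 2*\<epsilon>" if xyR: "(x,y) \<in> R'" for x y
  proof -
    obtain a b c d where w: "(a,b) \<in> R" "c \<in> NX" "d \<in> NY" "dist c x \<le> \<epsilon>" "dist c a \<le> \<epsilon>"
        "dist d y \<le> \<epsilon>" "dist d b \<le> \<epsilon>" using xyR unfolding R'_def by blast
    have "dist x a \<le> dist c x + dist c a" by (rule dist_triangle3)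
    moreover have "dist y b \<le> dist d y + dist d b" by (rule dist_triangle3)
    ultimately show ?thesis using w by (intro bexI[OF _ w(1)]) auto
  qed
  have dis: "distortion R' \<le> distortion R + ereal (8 * \<epsilon>)"
    unfolding distortion_def
  proof (rule SUP_least)
    fix p assume "p \<in> R' \<times> R'"
    then obtain x y x' y' where p: "p = ((x,y),(x',y'))" "(x,y) \<in> R'" "(x',y') \<in> R'" by auto
    obtain a b where ab: "(a,b) \<in> R" "dist x a \<le> 2*\<epsilon>" "dist y b \<le> 2*\<epsilon>" using close p(2) by blast
    obtain a' b' where ab': "(a',b') \<in> R" "dist x' a' \<le> 2*\<epsilon>" "dist y' b' \<le> 2*\<epsilon>" using close p(3) by blast
    have s: "ereal \<bar>dist a a' - dist b b'\<bar> \<le> (SUP p\<in>R \<times> R.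
      ereal \<bar>dist (fst (fst p)) (fst (snd p)) - dist (snd (fst p)) (snd (snd p))\<bar>)"
      by (rule SUP_upper2[of "((a,b),(a',b'))"]) (use ab ab' in auto)
    have t1: "\<bar>dist x x' - dist a a'\<bar> \<le> dist x a + dist x' a'"
      by (smt (verit) dist_commute dist_triangle)
    have t2: "\<bar>dist y y' - dist b b'\<bar> \<le> dist y b + dist y' b'"
      by (smt (verit) dist_commute dist_triangle)
    have "\<bar>dist x x' - dist y y'\<bar> \<le> \<bar>dist a a' - dist b b'\<bar> + 8 * \<epsilon>"
      using t1 t2 ab ab' by linarith
    then have "ereal \<bar>dist x x' - dist y y'\<bar> \<le> ereal \<bar>dist a a' - dist b b'\<bar> + ereal (8 * \<epsilon>)"
      by simp
    also have "\<dots> \<le> (SUP p\<in>R \<times> R.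
      ereal \<bar>dist (fst (fst p)) (fst (snd p)) - dist (snd (fst p)) (snd (snd p))\<bar>) + ereal (8 * \<epsilon>)"
      using s by (rule add_right_mono)
    finally show "ereal \<bar>dist (fst (fst p)) (fst (snd p)) - dist (snd (fst p)) (snd (snd p))\<bar>
      \<le> (SUP p\<in>R \<times> R.
      ereal \<bar>dist (fst (fst p)) (fst (snd p)) - dist (snd (fst p)) (snd (snd p))\<bar>) + ereal (8 * \<epsilon>)"
      using p by simp
  qed
  show ?thesis using corr usc1 usc2 dis unfolding us_correspondences_def by blast
qed

theorem mainTheorem8:
  fixes X :: "'a::metric_space set" and Y :: "'b::metric_space set"
  assumes "X \<noteq> {}" and "Y \<noteq> {}"
    and "totally_bounded X" and "totally_bounded Y"
  shows "GH_dist_us X Y = GH_dist X Y"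
proof -
  have sub: "us_correspondences X Y \<subseteq> correspondences X Y"
    unfolding us_correspondences_def by auto
  have le1: "(INF R\<in>correspondences X Y. distortion R) \<le> (INF R\<in>us_correspondences X Y. distortion R)"
    by (rule INF_superset_mono[OF sub]) simp
  have le2: "(INF R\<in>us_correspondences X Y. distortion R) \<le> (INF R\<in>correspondences X Y. distortion R)"
  proof (rule INF_greatest)
    fix R assume R: "R \<in> correspondences X Y"
    show "(INF R\<in>us_correspondences X Y. distortion R) \<le> distortion R"
    proof (rule ereal_le_epsilon2)
      fix e :: real assume e: "e > 0"
      obtain R' where R': "R' \<in> us_correspondences X Y"
        "distortion R' \<le> distortion R + ereal (8 * (e/8))"
        using approx_us[OF assms(3,4) R, of "e/8"] e by auto
      have "(INF R\<in>us_correspondences X Y. distortion R) \<le> distortion R'"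
        by (rule INF_lower[OF R'(1)])
      also have "\<dots> \<le> distortion R + ereal e" using R'(2) by simp
      finally show "(INF R\<in>us_correspondences X Y. distortion R) \<le> distortion R + ereal e" .
    qed
  qed
  show ?thesis unfolding GH_dist_us_def GH_dist_def using antisym[OF le2 le1] by simp
qed

end
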